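(* Let $h_1,\dots,h_{m_1},g_1,\dots,g_{m_2}\in\mathbb{R}[X]$ with every $\deg g_j$ even, and let $U=\{x\in\mathbb{R}^n:h_i(x)=0\ (i=1,\dots,m_1),\ g_j(x)\ge0\ (j=1,\dots,m_2)\}$. Define $\tilde U^{o}=\{\tilde x=(x_0,x)\in\mathbb{R}^{n+1}:\tilde h_i(\tilde x)=0,\ \tilde g_j(\tilde x)\ge0,\ x_0>0\}$ and $\tilde U^{c}$ the same set with $x_0\ge0$ in place of $x_0>0$. Suppose $U$ is not compact. If $\mathrm{conv}(\overline{\tilde U^{o}})$ is closed and pointed, then $U$ is not closed at $\infty$, i.e. $\overline{\tilde U^{o}}\neq\tilde U^{c}$.
   Context: $X=(X_1,\dots,X_n)$, $\tilde X=(X_0,X)$. For $f\in\mathbb{R}[X]$ of degree $d$, its homogenization is $\tilde f(\tilde X)=X_0^df(X/X_0)$. A closed convex cone $K$ is pointed if $K\cap(-K)=\{0\}$. $U$ is closed at $\infty$ if $\overline{\tilde U^{o}}=\tilde U^{c}$. Overline denotes closure, $\mathrm{conv}$ convex hull. *)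

theory Defs
  imports "HOL-Analysis.Analysis" "HOL-Library.Poly_Mapping"
begin

text \<open>Real polynomials in the variables X_i, i ranging over the finite index type 'n
  (so R[X] with n = CARD('n) variables): finitely supported maps from monomials
  (exponent vectors 'n =>0 nat) to real coefficients.\<close>

type_synonym 'n rpoly = "('n \<Rightarrow>\<^sub>0 nat) \<Rightarrow>\<^sub>0 real"

definition mon_deg :: "('n::finite \<Rightarrow>\<^sub>0 nat) \<Rightarrow> nat" where
  "mon_deg a = (\<Sum>i\<in>UNIV. Poly_Mapping.lookup a i)"

definition rpoly_deg :: "'n::finite rpoly \<Rightarrow> nat" where
  "rpoly_deg f = Max (insert 0 (mon_deg ` Poly_Mapping.keys f))"

definition rpoly_eval :: "'n::finite rpoly \<Rightarrow> real^'n \<Rightarrow> real" where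
  "rpoly_eval f x = (\<Sum>a\<in>Poly_Mapping.keys f. Poly_Mapping.lookup f a * (\<Prod>i\<in>UNIV. (x $ i) ^ Poly_Mapping.lookup a i))"

text \<open>Evaluation of the homogenization  X_0^d f(X/X_0), d = deg f, at (x0, x).\<close>
definition hom_eval :: "'n::finite rpoly \<Rightarrow> real \<times> (real^'n) \<Rightarrow> real" where
  "hom_eval f xx = (\<Sum>a\<in>Poly_Mapping.keys f. Poly_Mapping.lookup f a * (fst xx) ^ (rpoly_deg f - mon_deg a)
                      * (\<Prod>i\<in>UNIV. (snd xx $ i) ^ Poly_Mapping.lookup a i))"

definition basic_semialg :: "'n::finite rpoly list \<Rightarrow> 'n rpoly list \<Rightarrow> (real^'n) set" where
  "basic_semialg hs gs = {x. (\<forall>h\<in>set hs. rpoly_eval h x = 0) \<and> (\<forall>g\<in>set gs. rpoly_eval g x \<ge> 0)}"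

definition U_open_tilde :: "'n::finite rpoly list \<Rightarrow> 'n rpoly list \<Rightarrow> (real \<times> (real^'n)) set" where
  "U_open_tilde hs gs = {xx. (\<forall>h\<in>set hs. hom_eval h xx = 0) \<and> (\<forall>g\<in>set gs. hom_eval g xx \<ge> 0) \<and> fst xx > 0}"

definition U_closed_tilde :: "'n::finite rpoly list \<Rightarrow> 'n rpoly list \<Rightarrow> (real \<times> (real^'n)) set" where
  "U_closed_tilde hs gs = {xx. (\<forall>h\<in>set hs. hom_eval h xx = 0) \<and> (\<forall>g\<in>set gs. hom_eval g xx \<ge> 0) \<and> fst xx \<ge> 0}"

definition pointed :: "'a::real_vector set \<Rightarrow> bool" where
  "pointed K \<longleftrightarrow> K \<inter> uminus ` K = {0}"

definition closed_at_infinity :: "'n::finite rpoly list \<Rightarrow> 'n rpoly list \<Rightarrow> bool" where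
  "closed_at_infinity hs gs \<longleftrightarrow> closure (U_open_tilde hs gs) = U_closed_tilde hs gs"

end

theory Submission
  imports Defs
begin

lemma mon_deg_le: "a \<in> Poly_Mapping.keys f \<Longrightarrow> mon_deg a \<le> rpoly_deg f"
  unfolding rpoly_deg_def by (simp add: finite_keys)

lemma hom_eval_scale:
  fixes f :: "'n::finite rpoly"
  shows "hom_eval f (t *\<^sub>R xx) = t ^ rpoly_deg f * hom_eval f xx"
proof -
  have "hom_eval f (t *\<^sub>R xx) = (\<Sum>a\<in>Poly_Mapping.keys f. t ^ rpoly_deg f * (Poly_Mapping.lookup f a * (fst xx) ^ (rpoly_deg f - mon_deg a)
                      * (\<Prod>i\<in>UNIV. (snd xx $ i) ^ Poly_Mapping.lookup a i)))"
    unfolding hom_eval_def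
  proof (rule sum.cong[OF refl])
    fix a assume a: "a \<in> Poly_Mapping.keys f"
    have p: "(\<Prod>i\<in>UNIV. (t * snd xx $ i) ^ Poly_Mapping.lookup a i) = t ^ mon_deg a * (\<Prod>i\<in>UNIV. (snd xx $ i) ^ Poly_Mapping.lookup a i)"
      by (simp add: power_mult_distrib prod.distrib mon_deg_def power_sum)
    have e: "t ^ (rpoly_deg f - mon_deg a) * t ^ mon_deg a = t ^ rpoly_deg f"
      using mon_deg_le[OF a] by (simp flip: power_add)
    show "Poly_Mapping.lookup f a * fst (t *\<^sub>R xx) ^ (rpoly_deg f - mon_deg a) *
         (\<Prod>i\<in>UNIV. snd (t *\<^sub>R xx) $ i ^ Poly_Mapping.lookup a i) =
         t ^ rpoly_deg f * (Poly_Mapping.lookup f a * fst xx ^ (rpoly_deg f - mon_deg a) *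
          (\<Prod>i\<in>UNIV. snd xx $ i ^ Poly_Mapping.lookup a i))"
      using p e[symmetric] by (simp add: power_mult_distrib algebra_simps)
  qed
  also have "\<dots> = t ^ rpoly_deg f * hom_eval f xx"
    unfolding hom_eval_def by (simp add: sum_distrib_left)
  finally show ?thesis .
qed

lemma hom_eval_one: "hom_eval f (1, x) = rpoly_eval f x"
  unfolding hom_eval_def rpoly_eval_def by simp

lemma cont_rpoly: "continuous_on UNIV (rpoly_eval f)"
  unfolding rpoly_eval_def by (intro continuous_intros)

lemma closed_U: "closed (basic_semialg hs gs)"
proof -
  have "basic_semialg hs gs = (\<Inter>h\<in>set hs. {x. rpoly_eval h x = 0}) \<inter> (\<Inter>g\<in>set gs. {x. 0 \<le> rpoly_eval g x})"
    unfolding basic_semialg_def by auto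
  moreover have "closed {x. rpoly_eval h x = 0}" for h :: "'a rpoly"
    by (rule closed_Collect_eq[OF cont_rpoly continuous_on_const])
  moreover have "closed {x. 0 \<le> rpoly_eval g x}" for g :: "'a rpoly"
    by (rule closed_Collect_le[OF continuous_on_const cont_rpoly])
  ultimately show ?thesis by (auto intro!: closed_INT closed_Int)
qed

lemma scale_open:
  assumes "xx \<in> U_open_tilde hs gs" "t > 0"
  shows "t *\<^sub>R xx \<in> U_open_tilde hs gs"
  using assms unfolding U_open_tilde_def by (auto simp: hom_eval_scale)

lemma neg_closed:
  assumes "xx \<in> U_closed_tilde hs gs" "fst xx = 0" "\<forall>g\<in>set gs. even (rpoly_deg g)"
  shows "- xx \<in> U_closed_tilde hs gs"
proof -
  have he: "hom_eval f (- xx) = (-1) ^ rpoly_deg f * hom_eval f xx" for f :: "'a rpoly"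
    using hom_eval_scale[of f "-1" xx] by simp
  show ?thesis using assms unfolding U_closed_tilde_def
    by (auto simp: he)
qed

theorem mainTheorem14:
  fixes hs gs :: "'n::finite rpoly list"
  assumes "\<forall>g\<in>set gs. even (rpoly_deg g)"
    and "\<not> compact (basic_semialg hs gs)"
    and "closed (convex hull (closure (U_open_tilde hs gs)))"
    and "pointed (convex hull (closure (U_open_tilde hs gs)))"
  shows "\<not> closed_at_infinity hs gs"
proof
  assume cai: "closed_at_infinity hs gs"
  let ?U = "basic_semialg hs gs"
  have "\<not> bounded ?U" using assms(2) closed_U compact_eq_bounded_closed by blast
  then have "\<forall>k::nat. \<exists>x\<in>?U. real k < norm x" unfolding bounded_iff by (meson not_less)
  then obtain x where xU: "\<And>k. x k \<in> ?U" and xn: "\<And>k. real k < norm (x k)" by metis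
  define y where "y k = (1 / norm ((1::real), x k)) *\<^sub>R ((1::real), x k)" for k
  have npos: "norm ((1::real), x k) > 0" for k by (simp add: zero_prod_def)
  have ge: "norm (x k) \<le> norm ((1::real), x k)" for k by (simp add: norm_Pair real_le_rsqrt)
  have ge1: "1 \<le> norm ((1::real), x k)" for k by (simp add: norm_Pair real_le_rsqrt)
  have yO: "y k \<in> U_open_tilde hs gs" for k
  proof -
    have "((1::real), x k) \<in> U_open_tilde hs gs"
      using xU[of k] unfolding U_open_tilde_def basic_semialg_def by (simp add: hom_eval_one)
    then show ?thesis unfolding y_def using npos by (intro scale_open) auto
  qed
  have yS: "y k \<in> sphere 0 1" for k
  proof -
    have "norm (y k) = 1" unfolding y_def using npos[of k] by (simp only: norm_scaleR) simp
    then show ?thesis by simp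
  qed
  obtain l r where lS: "l \<in> sphere 0 1" and r: "strict_mono r" and lim: "(y \<circ> r) \<longlonglongrightarrow> l"
    using compact_imp_seq_compact[OF compact_sphere, of 0 1] yS unfolding seq_compact_def by metis
  have lcl: "l \<in> closure (U_open_tilde hs gs)"
    unfolding closure_sequential using yO lim by (auto intro!: exI[of _ "y \<circ> r"])
  have fl: "fst l = 0"
  proof -
    have t1: "(\<lambda>k. fst ((y \<circ> r) k)) \<longlonglongrightarrow> fst l" using lim by (intro tendsto_intros)
    have b: "\<bar>fst ((y \<circ> r) k)\<bar> \<le> 2 / real (Suc (r k))" for k
    proof -
      have "real (r k) < norm (x (r k))" by (rule xn)
      then have "real (r k) < norm ((1::real), x (r k))" using ge[of "r k"] by linarith
      moreover have "1 \<le> norm ((1::real), x (r k))" by (rule ge1)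
      ultimately have h: "real (Suc (r k)) \<le> 2 * norm ((1::real), x (r k))" by simp
      have "\<bar>fst ((y \<circ> r) k)\<bar> = 1 / norm ((1::real), x (r k))"
        unfolding y_def using npos[of "r k"] by simp
      also have "\<dots> \<le> 2 / real (Suc (r k))" using h npos[of "r k"]
        by (simp add: field_simps)
      finally show ?thesis .
    qed
    have t0: "(\<lambda>n. 2 / real (Suc n)) \<longlonglongrightarrow> 0"
      using LIMSEQ_Suc[OF lim_const_over_n[of "2::real"]] by simp
    have t2: "(\<lambda>k. 2 / real (Suc (r k))) \<longlonglongrightarrow> 0"
      using LIMSEQ_subseq_LIMSEQ[OF t0 r] by (simp add: comp_def)
    have "(\<lambda>k. fst ((y \<circ> r) k)) \<longlonglongrightarrow> 0"
    proof (rule Lim_null_comparison[OF _ t2])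
      show "\<forall>\<^sub>F k in sequentially. norm (fst ((y \<circ> r) k)) \<le> 2 / real (Suc (r k))"
        using b by (simp only: real_norm_def) (rule always_eventually, blast)
    qed
    then show ?thesis using t1 LIMSEQ_unique by blast
  qed
  have lc: "l \<in> U_closed_tilde hs gs" using cai lcl unfolding closed_at_infinity_def by simp
  have "- l \<in> U_closed_tilde hs gs" using neg_closed[OF lc fl assms(1)] .
  then have "- l \<in> closure (U_open_tilde hs gs)"
    using cai unfolding closed_at_infinity_def by simp
  then have ml: "- l \<in> convex hull (closure (U_open_tilde hs gs))"
    by (rule hull_inc)
  have lK: "l \<in> convex hull (closure (U_open_tilde hs gs))" using lcl by (rule hull_inc)
  have "l \<in> uminus ` (convex hull (closure (U_open_tilde hs gs)))"
    using ml by (rule rev_image_eqI) simp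
  then have "l \<in> convex hull (closure (U_open_tilde hs gs)) \<inter> uminus ` (convex hull (closure (U_open_tilde hs gs)))"
    using lK by (rule IntI[rotated])
  then have "l = 0" using assms(4) unfolding pointed_def by simp
  then show False using lS by simp
qed

end
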